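(* For every $f:\mathbb{Z}\to\mathbb{R}$ such that $\widetilde{M}f$ is not identically $+\infty$, $$\|(\widetilde{M}f)'\|_{\infty}\leq \frac{1}{2}\|f'\|_{\infty}.$$ Moreover, equality is attained when $f$ is a delta function (e.g. $f=\mathbf{1}_{\{0\}}$).
   Context: For $f:\mathbb{Z}\to\mathbb{R}$, the uncentered discrete Hardy–Littlewood maximal function is $\widetilde{M}f(n)=\sup_{r,s\in\mathbb{Z}_{\ge 0}}\frac{1}{r+s+1}\sum_{k=-s}^{r}|f(n+k)|$ (possibly $+\infty$). For $g:\mathbb{Z}\to\mathbb{R}$, $g'(n)=g(n+1)-g(n)$ and $\|g\|_\infty=\sup_{n\in\mathbb{Z}}|g(n)|$. *)

theory Defs
  imports "HOL-Analysis.Analysis"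
begin

text \<open>Uncentered discrete Hardy--Littlewood maximal function, valued in the extended reals
  (it may be +infinity). The pair (r,s) ranges over all pairs of nonnegative integers.\<close>
definition umax :: "(int \<Rightarrow> real) \<Rightarrow> int \<Rightarrow> ereal" where
  "umax f n = (SUP rs :: nat \<times> nat.
      ereal ((\<Sum>k = - int (snd rs) .. int (fst rs). \<bar>f (n + k)\<bar>) / real (fst rs + snd rs + 1)))"

definition dderiv :: "(int \<Rightarrow> real) \<Rightarrow> int \<Rightarrow> real" where
  "dderiv g n = g (n + 1) - g n"

definition supnorm :: "(int \<Rightarrow> real) \<Rightarrow> ereal" where
  "supnorm g = (SUP n. ereal \<bar>g n\<bar>)"

end

theory Submission
  imports Defs
begin

lemma sum_shift: "(\<Sum>k=a..b. g (n+k)) = (\<Sum>m=n+a..n+b. (g m::real))" for n :: int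
  by (rule sum.reindex_bij_witness[of _ "\<lambda>m. m - n" "\<lambda>k. n + k"]) auto

lemma lip_pt_up:
  assumes "\<forall>m. \<bar>g (m+1) - g m\<bar> \<le> (L::real)"
  shows "g (b - int d) \<le> g b + real d * L"
proof (induction d)
  case 0 then show ?case by simp
next
  case (Suc d)
  have "\<bar>g (b - int d - 1 + 1) - g (b - int d - 1)\<bar> \<le> L" using assms by blast
  then show ?case using Suc by (simp add: algebra_simps)
qed

lemma lip_pt_lo:
  assumes "\<forall>m. \<bar>g (m+1) - g m\<bar> \<le> (L::real)"
  shows "g (a + int d) \<le> g a + real d * L"
proof (induction d)
  case 0 then show ?case by simp
next
  case (Suc d)
  have "\<bar>g (a + int d + 1) - g (a + int d)\<bar> \<le> L" using assms by blast
  then show ?case using Suc by (simp add: algebra_simps)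
qed

lemma lip_sum_up:
  assumes "\<forall>m. \<bar>g (m+1) - g m\<bar> \<le> (L::real)"
  shows "(\<Sum>m=b-int d..b. g m) \<le> (real d+1)*g b + L*real d*(real d+1)/2"
proof (induction d)
  case 0 then show ?case by simp
next
  case (Suc d)
  have e: "{b - int (Suc d)..b} = insert (b - int (Suc d)) {b - int d..b}" by auto
  have "(\<Sum>m=b-int (Suc d)..b. g m) = g (b - int (Suc d)) + (\<Sum>m=b-int d..b. g m)"
    unfolding e by (subst sum.insert) auto
  moreover have "g (b - int (Suc d)) \<le> g b + real (Suc d) * L" by (rule lip_pt_up[OF assms])
  ultimately show ?case using Suc by (simp add: algebra_simps add_divide_distrib)
qed

lemma lip_sum_lo:
  assumes "\<forall>m. \<bar>g (m+1) - g m\<bar> \<le> (L::real)"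
  shows "(\<Sum>m=a..a+int d. g m) \<le> (real d+1)*g a + L*real d*(real d+1)/2"
proof (induction d)
  case 0 then show ?case by simp
next
  case (Suc d)
  have e: "{a..a+int (Suc d)} = insert (a + int (Suc d)) {a..a+int d}" by auto
  have "(\<Sum>m=a..a+int (Suc d). g m) = g (a + int (Suc d)) + (\<Sum>m=a..a+int d. g m)"
    unfolding e by (subst sum.insert) auto
  moreover have "g (a + int (Suc d)) \<le> g a + real (Suc d) * L" by (rule lip_pt_lo[OF assms])
  ultimately show ?case using Suc by (simp add: algebra_simps add_divide_distrib)
qed

definition avg :: "(int \<Rightarrow> real) \<Rightarrow> int \<Rightarrow> nat \<Rightarrow> nat \<Rightarrow> real" where
  "avg g n r s = (\<Sum>m = n - int s .. n + int r. g m) / real (r+s+1)"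

lemma umax_avg: "umax f n = (SUP rs :: nat \<times> nat. ereal (avg (\<lambda>m. \<bar>f m\<bar>) n (fst rs) (snd rs)))"
  unfolding umax_def avg_def
  by (intro SUP_cong refl arg_cong[where f=ereal]) (auto simp: add.commute intro!: sum.reindex_bij_witness[of _ "\<lambda>m. m - n" "\<lambda>k. k + n"])

lemma step_right:
  assumes L: "\<forall>m. \<bar>g (m+1) - g m\<bar> \<le> (L::real)"
  shows "\<exists>r' s'. avg g n r s - L/2 \<le> avg g (n+1) r' s'"
proof -
  have L0: "L \<ge> 0" using L by (meson abs_ge_zero order_trans)
  show ?thesis
  proof (cases r)
    case (Suc r1)
    have "avg g (n+1) r1 (s+1) = avg g n r s"
      unfolding avg_def Suc by (simp add: algebra_simps)
    then have "avg g n r s - L/2 \<le> avg g (n+1) r1 (s+1)" using L0 by simp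
    then show ?thesis by blast
  next
    case 0
    define S where "S = (\<Sum>m = n - int s .. n. g m)"
    have e: "{n + 1 - int (s+1)..n+1} = insert (n+1) {n - int s..n}" by auto
    have "avg g (n+1) 0 (s+1) = (\<Sum>m = n + 1 - int (s+1)..n+1. g m) / (real s + 2)"
      by (simp add: avg_def add.commute)
    also have "\<dots> = (S + g (n+1)) / (real s + 2)"
      unfolding S_def e by (subst sum.insert) (auto simp: algebra_simps)
    finally have a1: "avg g (n+1) 0 (s+1) = (S + g (n+1)) / (real s + 2)" .
    have a0: "avg g n r s = S / (real s + 1)" unfolding avg_def S_def 0 by (simp add: add.commute)
    have sb: "S \<le> (real s+1)*g n + L*real s*(real s+1)/2" unfolding S_def by (rule lip_sum_up[OF L])
    have g1: "g (n+1) \<ge> g n - L" using L by (smt (verit))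
    have "S / (real s + 1) - L/2 \<le> (S + g (n+1)) / (real s + 2)"
    proof -
      have "(real s+1) * g (n+1) \<ge> (real s+1) * (g n - L)" using g1 by (intro mult_left_mono) auto
      then have "S \<le> (real s+1) * g (n+1) + L*(real s+1)*(real s + 2)/2"
        using sb by (simp add: field_simps)
      then show ?thesis by (simp add: field_simps)
    qed
    then show ?thesis using a0 a1 by metis
  qed
qed

lemma step_left:
  assumes L: "\<forall>m. \<bar>g (m+1) - g m\<bar> \<le> (L::real)"
  shows "\<exists>r' s'. avg g (n+1) r s - L/2 \<le> avg g n r' s'"
proof -
  have L0: "L \<ge> 0" using L by (meson abs_ge_zero order_trans)
  show ?thesis
  proof (cases s)
    case (Suc s1)
    have "avg g n (r+1) s1 = avg g (n+1) r s"
      unfolding avg_def Suc by (simp add: algebra_simps)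
    then have "avg g (n+1) r s - L/2 \<le> avg g n (r+1) s1" using L0 by simp
    then show ?thesis by blast
  next
    case 0
    define S where "S = (\<Sum>m = n+1 .. n+1 + int r. g m)"
    have e: "{n - int 0..n + int (r+1)} = insert n {n+1..n+1+int r}" by auto
    have a1: "avg g n (r+1) 0 = (S + g n) / (real r + 2)"
      unfolding avg_def S_def e by (subst sum.insert) (auto simp: algebra_simps)
    have a0: "avg g (n+1) r s = S / (real r + 1)" unfolding avg_def S_def 0 by (simp add: add.commute)
    have sb: "S \<le> (real r+1)*g (n+1) + L*real r*(real r+1)/2" unfolding S_def by (rule lip_sum_lo[OF L])
    have g1: "g n \<ge> g (n+1) - L" using L by (smt (verit))
    have "S / (real r + 1) - L/2 \<le> (S + g n) / (real r + 2)"
    proof -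
      have "(real r+1) * g n \<ge> (real r+1) * (g (n+1) - L)" using g1 by (intro mult_left_mono) auto
      then have "S \<le> (real r+1) * g n + L*(real r+1)*(real r + 2)/2"
        using sb by (simp add: field_simps)
      then show ?thesis by (simp add: field_simps)
    qed
    then show ?thesis using a0 a1 by (metis add_0 0)
  qed
qed

lemma umax_steps:
  assumes L: "\<forall>m. \<bar>\<bar>f (m+1)\<bar> - \<bar>f m\<bar>\<bar> \<le> (L::real)"
  shows "umax f n \<le> umax f (n+1) + ereal (L/2)" "umax f (n+1) \<le> umax f n + ereal (L/2)"
proof -
  show "umax f n \<le> umax f (n+1) + ereal (L/2)"
    unfolding umax_avg
  proof (rule SUP_least)
    fix rs :: "nat \<times> nat"
    obtain r' s' where rs: "avg (\<lambda>m. \<bar>f m\<bar>) n (fst rs) (snd rs) - L/2 \<le> avg (\<lambda>m. \<bar>f m\<bar>) (n+1) r' s'"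
      using step_right[OF L] by blast
    have "ereal (avg (\<lambda>m. \<bar>f m\<bar>) n (fst rs) (snd rs)) \<le> ereal (avg (\<lambda>m. \<bar>f m\<bar>) (n+1) r' s') + ereal (L/2)"
      using rs by simp
    also have "\<dots> \<le> (SUP rs :: nat \<times> nat. ereal (avg (\<lambda>m. \<bar>f m\<bar>) (n+1) (fst rs) (snd rs))) + ereal (L/2)"
      by (intro add_right_mono SUP_upper2[of "(r',s')"]) auto
    finally show "ereal (avg (\<lambda>m. \<bar>f m\<bar>) n (fst rs) (snd rs)) \<le> \<dots>" .
  qed
  show "umax f (n+1) \<le> umax f n + ereal (L/2)"
    unfolding umax_avg
  proof (rule SUP_least)
    fix rs :: "nat \<times> nat"
    obtain r' s' where rs: "avg (\<lambda>m. \<bar>f m\<bar>) (n+1) (fst rs) (snd rs) - L/2 \<le> avg (\<lambda>m. \<bar>f m\<bar>) n r' s'"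
      using step_left[OF L] by blast
    have "ereal (avg (\<lambda>m. \<bar>f m\<bar>) (n+1) (fst rs) (snd rs)) \<le> ereal (avg (\<lambda>m. \<bar>f m\<bar>) n r' s') + ereal (L/2)"
      using rs by simp
    also have "\<dots> \<le> (SUP rs :: nat \<times> nat. ereal (avg (\<lambda>m. \<bar>f m\<bar>) n (fst rs) (snd rs))) + ereal (L/2)"
      by (intro add_right_mono SUP_upper2[of "(r',s')"]) auto
    finally show "ereal (avg (\<lambda>m. \<bar>f m\<bar>) (n+1) (fst rs) (snd rs)) \<le> \<dots>" .
  qed
qed

lemma umax_nonneg: "umax f n \<ge> 0"
  unfolding umax_avg by (rule SUP_upper2[of "(0,0)"]) (auto simp: avg_def)

lemma umax_finite:
  assumes L: "\<forall>m. \<bar>\<bar>f (m+1)\<bar> - \<bar>f m\<bar>\<bar> \<le> (L::real)" and n0: "umax f n0 \<noteq> \<infinity>"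
  shows "umax f n \<noteq> \<infinity>"
proof (induction n rule: int_induct[where k=n0])
  case base then show ?case using n0 .
next
  case (step1 i)
  have "umax f (i+1) \<le> umax f i + ereal (L/2)" by (rule umax_steps(2)[OF L])
  then show ?case using step1 by auto
next
  case (step2 i)
  have "umax f (i-1) \<le> umax f (i-1+1) + ereal (L/2)" by (rule umax_steps(1)[OF L])
  then show ?case using step2 by auto
qed

lemma supnorm_eq:
  assumes "\<And>n. \<bar>g n\<bar> \<le> v" "\<bar>g n0\<bar> = v"
  shows "supnorm g = ereal v"
  unfolding supnorm_def
proof (rule antisym)
  show "(SUP n. ereal \<bar>g n\<bar>) \<le> ereal v" by (rule SUP_least) (use assms in auto)
  show "ereal v \<le> (SUP n. ereal \<bar>g n\<bar>)" by (rule SUP_upper2[of n0]) (use assms in auto)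
qed

lemma part1:
  fixes f :: "int \<Rightarrow> real"
  assumes "\<exists>n. umax f n \<noteq> \<infinity>"
  shows "supnorm (dderiv (\<lambda>n. real_of_ereal (umax f n))) \<le> ereal (1/2) * supnorm (dderiv f)"
proof (cases "supnorm (dderiv f) = \<infinity>")
  case True then show ?thesis by simp
next
  case False
  have "ereal \<bar>dderiv f 0\<bar> \<le> supnorm (dderiv f)" unfolding supnorm_def by (rule SUP_upper) auto
  then have "supnorm (dderiv f) \<noteq> -\<infinity>" by auto
  then obtain L where LL: "supnorm (dderiv f) = ereal L" using False by (cases "supnorm (dderiv f)") auto
  have Lb: "\<bar>dderiv f m\<bar> \<le> L" for m
  proof -
    have "ereal \<bar>dderiv f m\<bar> \<le> supnorm (dderiv f)" unfolding supnorm_def by (rule SUP_upper) auto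
    then show ?thesis using LL by simp
  qed
  have L: "\<forall>m. \<bar>\<bar>f (m+1)\<bar> - \<bar>f m\<bar>\<bar> \<le> L"
  proof
    fix m show "\<bar>\<bar>f (m+1)\<bar> - \<bar>f m\<bar>\<bar> \<le> L"
      using Lb[of m] abs_triangle_ineq3[of "f (m+1)" "f m"] unfolding dderiv_def by linarith
  qed
  obtain n0 where n0: "umax f n0 \<noteq> \<infinity>" using assms by blast
  define M where "M n = real_of_ereal (umax f n)" for n
  have ME: "umax f n = ereal (M n)" for n
    using umax_finite[OF L n0, of n] umax_nonneg[of f n] unfolding M_def
    by (cases "umax f n") auto
  have "\<bar>dderiv M n\<bar> \<le> L/2" for n
    using umax_steps[OF L, of n] unfolding ME dderiv_def by (simp only: plus_ereal.simps ereal_less_eq)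
  then have "supnorm (dderiv M) \<le> ereal (L/2)" unfolding supnorm_def by (intro SUP_least) auto
  then show ?thesis unfolding LL M_def by simp
qed

lemma umax_delta:
  fixes c :: real and a n :: int
  shows "umax (\<lambda>m. c * indicator {a} m) n = ereal (\<bar>c\<bar> / (real_of_int \<bar>n - a\<bar> + 1))"
proof -
  have av: "avg (\<lambda>m. \<bar>c * indicator {a} m\<bar>) n r s =
      (if n - int s \<le> a \<and> a \<le> n + int r then \<bar>c\<bar> else 0) / real (r+s+1)" for r s
  proof -
    have eq: "(\<lambda>m. \<bar>c * indicator {a} m\<bar>) = (\<lambda>m. if m = a then \<bar>c\<bar> else 0)"
      by (auto simp: indicator_def)
    show ?thesis unfolding avg_def eq by (simp add: sum.delta')
  qed
  show ?thesis unfolding umax_avg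
  proof (rule antisym)
    show "(SUP rs :: nat \<times> nat. ereal (avg (\<lambda>m. \<bar>c * indicator {a} m\<bar>) n (fst rs) (snd rs)))
        \<le> ereal (\<bar>c\<bar> / (real_of_int \<bar>n - a\<bar> + 1))"
    proof (rule SUP_least)
      fix rs :: "nat \<times> nat"
      obtain r s where rs: "rs = (r,s)" by fastforce
      have "(if n - int s \<le> a \<and> a \<le> n + int r then \<bar>c\<bar> else 0) / real (r+s+1)
              \<le> \<bar>c\<bar> / (real_of_int \<bar>n - a\<bar> + 1)"
      proof (cases "n - int s \<le> a \<and> a \<le> n + int r")
        case True
        then have "real_of_int \<bar>n - a\<bar> + 1 \<le> real (r+s+1)" by linarith
        then show ?thesis using True by (simp add: frac_le)
      qed auto
      then show "ereal (avg (\<lambda>m. \<bar>c * indicator {a} m\<bar>) n (fst rs) (snd rs))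
          \<le> ereal (\<bar>c\<bar> / (real_of_int \<bar>n - a\<bar> + 1))" unfolding av rs by simp
    qed
    define r where "r = nat (a - n)"
    define s where "s = nat (n - a)"
    have "avg (\<lambda>m. \<bar>c * indicator {a} m\<bar>) n r s = \<bar>c\<bar> / (real_of_int \<bar>n - a\<bar> + 1)"
    proof -
      have "n - int s \<le> a \<and> a \<le> n + int r" unfolding r_def s_def by linarith
      moreover have "real (r+s+1) = real_of_int \<bar>n - a\<bar> + 1" unfolding r_def s_def by linarith
      ultimately show ?thesis unfolding av by simp
    qed
    then show "ereal (\<bar>c\<bar> / (real_of_int \<bar>n - a\<bar> + 1)) \<le>
        (SUP rs :: nat \<times> nat. ereal (avg (\<lambda>m. \<bar>c * indicator {a} m\<bar>) n (fst rs) (snd rs)))"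
      by (intro SUP_upper2[of "(r,s)"]) auto
  qed
qed

lemma half_bound:
  fixes x :: int
  shows "\<bar>1 / (real_of_int \<bar>x + 1\<bar> + 1) - 1 / (real_of_int \<bar>x\<bar> + 1)\<bar> \<le> 1/2"
proof (cases "x \<ge> 0")
  case True
  define y where "y = real_of_int x"
  have y: "y \<ge> 0" using True y_def by simp
  have "\<bar>1 / (y + 2) - 1 / (y + 1)\<bar> \<le> 1/2"
  proof -
    have "1 / (y + 2) - 1 / (y + 1) = - 1 / ((y+1)*(y+2))" using y by (simp add: field_simps)
    moreover have P: "(y+1)*(y+2) \<ge> 1*2" using y by (intro mult_mono) auto
    moreover have "1 / ((y+1)*(y+2)) \<le> 1/2" using P by (intro divide_left_mono) auto
    ultimately show ?thesis by simp
  qed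
  then show ?thesis using True unfolding y_def by (simp add: add.commute)
next
  case False
  define y where "y = - real_of_int x"
  have y: "y \<ge> 1" using False y_def by simp
  have e1: "real_of_int \<bar>x + 1\<bar> + 1 = y" using False y_def by simp
  have e2: "real_of_int \<bar>x\<bar> + 1 = y + 1" using False y_def by simp
  have "\<bar>1 / y - 1 / (y + 1)\<bar> \<le> 1/2"
  proof -
    have "1 / y - 1 / (y + 1) = 1 / (y*(y+1))" using y by (simp add: field_simps)
    moreover have P: "y*(y+1) \<ge> 1*2" using y by (intro mult_mono) auto
    moreover have "1 / (y*(y+1)) \<le> 1/2" using P by (intro divide_left_mono) auto
    ultimately show ?thesis using y by simp
  qed
  then show ?thesis unfolding e1 e2 .
qed

lemma part2:
  fixes a :: int and c :: real
  shows "supnorm (dderiv (\<lambda>n. real_of_ereal (umax (\<lambda>m. c * indicator {a} m) n)))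
              = ereal (1/2) * supnorm (dderiv (\<lambda>m. c * indicator {a} m))"
proof -
  have d1: "supnorm (dderiv (\<lambda>m. c * indicator {a} m)) = ereal \<bar>c\<bar>"
    by (rule supnorm_eq[of _ _ a]) (auto simp: dderiv_def indicator_def)
  have M: "(\<lambda>n. real_of_ereal (umax (\<lambda>m. c * indicator {a} m) n)) = (\<lambda>n. \<bar>c\<bar> / (real_of_int \<bar>n - a\<bar> + 1))"
    unfolding umax_delta by simp
  have d2: "supnorm (dderiv (\<lambda>n. \<bar>c\<bar> / (real_of_int \<bar>n - a\<bar> + 1))) = ereal (\<bar>c\<bar>/2)"
  proof (rule supnorm_eq[of _ _ a])
    fix n
    have "\<bar>1 / (real_of_int \<bar>(n - a) + 1\<bar> + 1) - 1 / (real_of_int \<bar>n - a\<bar> + 1)\<bar> \<le> 1/2"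
      by (rule half_bound)
    then have "\<bar>c\<bar> * \<bar>1 / (real_of_int \<bar>(n - a) + 1\<bar> + 1) - 1 / (real_of_int \<bar>n - a\<bar> + 1)\<bar> \<le> \<bar>c\<bar> * (1/2)"
      by (intro mult_left_mono) auto
    moreover have "\<bar>c\<bar> / (real_of_int \<bar>n + 1 - a\<bar> + 1) - \<bar>c\<bar> / (real_of_int \<bar>n - a\<bar> + 1)
       = \<bar>c\<bar> * (1 / (real_of_int \<bar>(n - a) + 1\<bar> + 1) - 1 / (real_of_int \<bar>n - a\<bar> + 1))"
      by (simp add: algebra_simps)
    ultimately show "\<bar>dderiv (\<lambda>n. \<bar>c\<bar> / (real_of_int \<bar>n - a\<bar> + 1)) n\<bar> \<le> \<bar>c\<bar> / 2"
      unfolding dderiv_def by (simp add: abs_mult)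
  next
    show "\<bar>dderiv (\<lambda>n. \<bar>c\<bar> / (real_of_int \<bar>n - a\<bar> + 1)) a\<bar> = \<bar>c\<bar> / 2"
      unfolding dderiv_def by simp
  qed
  show ?thesis unfolding M d1 d2 by simp
qed

theorem theorem5p4:
  shows "(\<forall>f :: int \<Rightarrow> real. (\<exists>n. umax f n \<noteq> \<infinity>) \<longrightarrow>
            supnorm (dderiv (\<lambda>n. real_of_ereal (umax f n))) \<le> ereal (1/2) * supnorm (dderiv f))
       \<and> (\<forall>(a :: int) (c :: real).
            supnorm (dderiv (\<lambda>n. real_of_ereal (umax (\<lambda>m. c * indicator {a} m) n)))
              = ereal (1/2) * supnorm (dderiv (\<lambda>m. c * indicator {a} m)))"
  using part1 part2 by blast

end
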